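(* Let $\mathbb{K}\in\{\mathbb{R},\mathbb{C}\}$, $\star\in\{*,T\}$, $\epsilon_1,\epsilon_2\in\{1,-1\}$, and let $Q(\lambda)=\lambda^2M+\lambda D+K\in\mathbb{K}^{n\times n}[\lambda]$ satisfy $M^\star=\epsilon_1M$, $D^\star=\epsilon_2D$, $K^\star=\epsilon_1K$. Let $(\lambda_0,x_0)$ be an eigenpair of $Q(\lambda)$ with $\lambda_0\neq\epsilon_1\epsilon_2\lambda_0^\star$, and let $\tilde x_0$ be an eigenvector of $Q(\lambda)$ for the eigenvalue $\epsilon_1\epsilon_2\lambda_0^\star$. Let $X_0=[x_0\ \tilde x_0]$, $\Lambda_0=\mathrm{diag}(\lambda_0,\epsilon_1\epsilon_2\lambda_0^\star)$, and $s_0:=2\epsilon_1\epsilon_2\lambda_0^\star x_0^\star M\tilde x_0+x_0^\star D\tilde x_0$. Then $(X_0,\Lambda_0)$ is an invariant pair of $Q(\lambda)$ and $X_0^\star MX_0\Lambda_0+\epsilon_1\epsilon_2\Lambda_0^\star X_0^\star MX_0+X_0^\star DX_0=\begin{bmatrix}0&s_0\\\epsilon_2s_0^\star&0\end{bmatrix}$.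
   Context: For a matrix or vector $A$, $A^\star$ is $A^*$ (conjugate transpose) if $\star=*$ and $A^T$ if $\star=T$; for $\lambda\in\mathbb{C}$, $\lambda^\star=\overline{\lambda}$ if $\star=*$ and $\lambda^\star=\lambda$ if $\star=T$. An eigenpair $(\lambda_0,x_0)$ means $x_0\neq0$ and $(\lambda_0^2M+\lambda_0D+K)x_0=0$. A pair $(X,\Lambda)$ is an invariant pair of $Q(\lambda)$ if $MX\Lambda^2+DX\Lambda+KX=0$. *)

theory Defs
  imports "HOL-Analysis.Analysis"
begin

text \<open>The flag c selects the involution: c = True means conjugate transpose (*),
  c = False means plain transpose (T).\<close>

definition sstar :: "bool \<Rightarrow> complex \<Rightarrow> complex" where
  "sstar c z = (if c then cnj z else z)"

definition mstar :: "bool \<Rightarrow> complex^'m^'n \<Rightarrow> complex^'n^'m" where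
  "mstar c A = (\<chi> i j. sstar c (A $ j $ i))"

definition mscale :: "complex \<Rightarrow> complex^'m^'n \<Rightarrow> complex^'m^'n" where
  "mscale a A = (\<chi> i j. a * A $ i $ j)"

definition vform :: "bool \<Rightarrow> complex^'n \<Rightarrow> complex^'n^'n \<Rightarrow> complex^'n \<Rightarrow> complex" where
  "vform c x A y = (\<Sum>i\<in>UNIV. sstar c (x $ i) * (A *v y) $ i)"

definition Qeval :: "complex^'n^'n \<Rightarrow> complex^'n^'n \<Rightarrow> complex^'n^'n \<Rightarrow> complex \<Rightarrow> complex^'n^'n" where
  "Qeval M D K lam = (\<chi> i j. lam^2 * M$i$j + lam * D$i$j + K$i$j)"

definition eigenpair :: "complex^'n^'n \<Rightarrow> complex^'n^'n \<Rightarrow> complex^'n^'n \<Rightarrow> complex \<Rightarrow> complex^'n \<Rightarrow> bool" where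
  "eigenpair M D K lam x \<longleftrightarrow> x \<noteq> 0 \<and> Qeval M D K lam *v x = 0"

definition invariant_pair :: "complex^'n^'n \<Rightarrow> complex^'n^'n \<Rightarrow> complex^'n^'n \<Rightarrow> complex^'k^'n \<Rightarrow> complex^'k^'k \<Rightarrow> bool" where
  "invariant_pair M D K X L \<longleftrightarrow> M ** X ** (L ** L) + D ** X ** L + K ** X = 0"

end

theory Submission
  imports Defs
begin

lemma sstar_mult: "sstar c (a*b) = sstar c a * sstar c b" by (simp add: sstar_def)
lemma sstar_add: "sstar c (a+b) = sstar c a + sstar c b" by (simp add: sstar_def)
lemma sstar_sstar: "sstar c (sstar c a) = a" by (simp add: sstar_def)
lemma sstar_pm: "e \<in> {1,-1} \<Longrightarrow> sstar c e = e" by (auto simp: sstar_def)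
lemma sstar_pow: "sstar c (a^2) = (sstar c a)^2" by (simp add: sstar_def)
lemma sstar_sum: "sstar c (sum f S) = (\<Sum>x\<in>S. sstar c (f x))"
  by (simp add: sstar_def)
lemma sstar_0: "sstar c 0 = 0" by (simp add: sstar_def)

lemma vform_star: "sstar c (vform c x A y) = vform c y (mstar c A) x"
proof -
  have "sstar c (vform c x A y) = (\<Sum>i\<in>UNIV. \<Sum>j\<in>UNIV. x$i * sstar c (A$i$j) * sstar c (y$j))"
    by (simp add: vform_def sstar_sum sstar_mult sstar_sstar matrix_vector_mult_def sum_distrib_left mult.assoc)
  also have "\<dots> = (\<Sum>j\<in>UNIV. \<Sum>i\<in>UNIV. x$i * sstar c (A$i$j) * sstar c (y$j))"
    by (rule sum.swap)
  also have "\<dots> = vform c y (mstar c A) x"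
    by (simp add: vform_def mstar_def matrix_vector_mult_def sum_distrib_left algebra_simps)
  finally show ?thesis .
qed

lemma vform_mscale: "vform c x (mscale e A) y = e * vform c x A y"
  by (simp add: vform_def mscale_def matrix_vector_mult_def sum_distrib_left algebra_simps)

lemma Qv: "(Qeval M D K l *v x) $ i = l^2 * (M *v x)$i + l*(D *v x)$i + (K *v x)$i"
  by (simp add: matrix_vector_mult_def Qeval_def sum.distrib sum_distrib_left algebra_simps)

lemma vform_Q: "vform c x (Qeval M D K l) y = l^2 * vform c x M y + l * vform c x D y + vform c x K y"
  by (simp add: vform_def Qv sum.distrib sum_distrib_left algebra_simps)

lemma vform_zero: "A *v y = 0 \<Longrightarrow> vform c x A y = 0"
  by (simp add: vform_def)

lemma prod_entry: "(mstar c X ** A ** X)$i$j = vform c (\<chi> k. X$k$i) A (\<chi> k. X$k$j)"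
proof -
  have "(mstar c X ** A ** X)$i$j = (\<Sum>k\<in>UNIV. \<Sum>l\<in>UNIV. sstar c (X$l$i) * A$l$k * X$k$j)"
    by (simp add: matrix_matrix_mult_def mstar_def sum_distrib_right)
  also have "\<dots> = (\<Sum>l\<in>UNIV. \<Sum>k\<in>UNIV. sstar c (X$l$i) * A$l$k * X$k$j)"
    by (rule sum.swap)
  also have "\<dots> = vform c (\<chi> k. X$k$i) A (\<chi> k. X$k$j)"
    by (simp add: vform_def matrix_vector_mult_def sum_distrib_left mult.assoc)
  finally show ?thesis .
qed

lemma key:
  fixes a d k l m e1 e2 :: complex
  assumes "l^2*a + l*d + k = 0" "m^2*e1*a + m*e2*d + e1*k = 0" "e1^2=1" "e2^2=1" "l \<noteq> e1*e2*m"
  shows "a*(l+e1*e2*m) + d = 0"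
proof -
  have "(l - e1*e2*m)*(a*(l+e1*e2*m) + d) = 0" using assms(1-4) by algebra
  with assms(5) show ?thesis by simp
qed

lemma herm:
  assumes "mstar c A = mscale e A" "e \<in> {1,-1}"
  shows "sstar c (vform c x A y) = e * vform c y A x"
  using assms by (simp add: vform_star vform_mscale)

theorem corollary2p6:
  fixes M D K :: "complex^'n^'n"
    and realK c :: bool
    and e1 e2 lam0 :: complex
    and x0 xt0 :: "complex^'n"
  assumes field: "realK \<Longrightarrow> (\<forall>i j. Im (M$i$j) = 0 \<and> Im (D$i$j) = 0 \<and> Im (K$i$j) = 0)"
    and e1: "e1 \<in> {1, -1}" and e2: "e2 \<in> {1, -1}"
    and hM: "mstar c M = mscale e1 M" and hD: "mstar c D = mscale e2 D" and hK: "mstar c K = mscale e1 K"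
    and ep: "eigenpair M D K lam0 x0"
    and neq: "lam0 \<noteq> e1 * e2 * sstar c lam0"
    and ept: "eigenpair M D K (e1 * e2 * sstar c lam0) xt0"
  shows "let X0 = (\<chi> i j. if j = (1::2) then x0 $ i else xt0 $ i) :: complex^2^'n;
             L0 = (\<chi> i j. if i = j then (if i = (1::2) then lam0 else e1 * e2 * sstar c lam0) else 0) :: complex^2^2;
             s0 = 2 * e1 * e2 * sstar c lam0 * vform c x0 M xt0 + vform c x0 D xt0
         in invariant_pair M D K X0 L0 \<and>
            mstar c X0 ** M ** X0 ** L0 + mscale (e1 * e2) (mstar c L0 ** mstar c X0 ** M ** X0)
              + mstar c X0 ** D ** X0
            = (\<chi> i j. if i = 1 \<and> j = 2 then s0 else if i = 2 \<and> j = 1 then e2 * sstar c s0 else 0)"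
proof -
  define X0 where "X0 = ((\<chi> i j. if j = (1::2) then x0 $ i else xt0 $ i) :: complex^2^'n)"
  define mu where "mu = e1 * e2 * sstar c lam0"
  define L0 where "L0 = ((\<chi> i j. if i = j then (if i = (1::2) then lam0 else mu) else 0) :: complex^2^2)"
  have ee1: "e1^2 = 1" "sstar c e1 = e1" using e1 by (auto simp: sstar_def)
  have ee2: "e2^2 = 1" "sstar c e2 = e2" using e2 by (auto simp: sstar_def)
  have c1: "(\<chi> k. X0$k$1) = x0" by (simp add: X0_def vec_eq_iff)
  have c2: "(\<chi> k. X0$k$2) = xt0" by (simp add: X0_def vec_eq_iff)
  have Q1: "Qeval M D K lam0 *v x0 = 0" using ep by (simp add: eigenpair_def)
  have Q2: "Qeval M D K mu *v xt0 = 0" using ept by (simp add: eigenpair_def mu_def)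
  have smu: "sstar c mu = e1*e2*lam0" using ee1 ee2 by (simp add: mu_def sstar_mult sstar_sstar)
  have inv: "invariant_pair M D K X0 L0"
    unfolding invariant_pair_def vec_eq_iff
  proof (intro allI)
    fix i j
    have col: "(A ** X0)$i$j = (A *v (\<chi> k. X0$k$j))$i" for A :: "complex^'n^'n"
      by (simp add: matrix_matrix_mult_def matrix_vector_mult_def)
    show "(M ** X0 ** (L0 ** L0) + D ** X0 ** L0 + K ** X0) $ i $ j = 0 $ i $ j"
      using exhaust_2[of j]
    proof
      assume j: "j = 1"
      have "(M ** X0 ** (L0 ** L0) + D ** X0 ** L0 + K ** X0) $ i $ j = lam0^2 * (M *v x0)$i + lam0 * (D *v x0)$i + (K *v x0)$i"
        unfolding c1 [symmetric]
        using j by (simp add: matrix_vector_mult_def matrix_matrix_mult_def sum_2 L0_def power2_eq_square algebra_simps)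
      also have "\<dots> = (Qeval M D K lam0 *v x0)$i" by (simp only: Qv)
      finally show ?thesis using Q1 by simp
    next
      assume j: "j = 2"
      have "(M ** X0 ** (L0 ** L0) + D ** X0 ** L0 + K ** X0) $ i $ j = mu^2 * (M *v xt0)$i + mu * (D *v xt0)$i + (K *v xt0)$i"
        unfolding c2 [symmetric]
        using j by (simp add: matrix_vector_mult_def matrix_matrix_mult_def sum_2 L0_def power2_eq_square algebra_simps)
      also have "\<dots> = (Qeval M D K mu *v xt0)$i" by (simp only: Qv)
      finally show ?thesis using Q2 by simp
    qed
  qed
  define a11 where "a11 = vform c x0 M x0"
  define a12 where "a12 = vform c x0 M xt0"
  define a21 where "a21 = vform c xt0 M x0"
  define a22 where "a22 = vform c xt0 M xt0"
  define d11 where "d11 = vform c x0 D x0"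
  define d12 where "d12 = vform c x0 D xt0"
  define d21 where "d21 = vform c xt0 D x0"
  define d22 where "d22 = vform c xt0 D xt0"
  define k11 where "k11 = vform c x0 K x0"
  define k22 where "k22 = vform c xt0 K xt0"
  have q1: "lam0^2 * a11 + lam0 * d11 + k11 = 0"
    using vform_zero[OF Q1, of c x0] by (simp add: vform_Q a11_def d11_def k11_def)
  have q2: "mu^2 * a22 + mu * d22 + k22 = 0"
    using vform_zero[OF Q2, of c xt0] by (simp add: vform_Q a22_def d22_def k22_def)
  have sa11: "sstar c a11 = e1 * a11" using herm[OF hM e1] a11_def by simp
  have sd11: "sstar c d11 = e2 * d11" using herm[OF hD e2] d11_def by simp
  have sk11: "sstar c k11 = e1 * k11" using herm[OF hK e1] k11_def by simp
  have sa22: "sstar c a22 = e1 * a22" using herm[OF hM e1] a22_def by simp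
  have sd22: "sstar c d22 = e2 * d22" using herm[OF hD e2] d22_def by simp
  have sk22: "sstar c k22 = e1 * k22" using herm[OF hK e1] k22_def by simp
  have a21: "a21 = e1 * sstar c a12"
    using herm[OF hM e1, of x0 xt0] ee1 by (simp add: a21_def a12_def power2_eq_square)
  have d21: "d21 = e2 * sstar c d12"
    using herm[OF hD e2, of x0 xt0] ee2 by (simp add: d21_def d12_def power2_eq_square)
  have q1s: "(sstar c lam0)^2 * e1 * a11 + sstar c lam0 * e2 * d11 + e1 * k11 = 0"
  proof -
    have "sstar c (lam0^2 * a11 + lam0 * d11 + k11) = 0" using q1 by (simp add: sstar_0)
    then show ?thesis by (simp add: sstar_add sstar_mult sstar_pow sa11 sd11 sk11 algebra_simps)
  qed
  have q2s: "(sstar c mu)^2 * e1 * a22 + sstar c mu * e2 * d22 + e1 * k22 = 0"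
  proof -
    have "sstar c (mu^2 * a22 + mu * d22 + k22) = 0" using q2 by (simp add: sstar_0)
    then show ?thesis by (simp add: sstar_add sstar_mult sstar_pow sa22 sd22 sk22 algebra_simps)
  qed
  have F11: "a11 * (lam0 + e1*e2* sstar c lam0) + d11 = 0"
    by (rule key[OF q1 q1s ee1(1) ee2(1)]) (use neq in simp)
  have ne2: "mu \<noteq> e1*e2* sstar c mu"
  proof
    assume "mu = e1*e2* sstar c mu"
    then have "mu = (e1^2)*(e2^2)*lam0" by (simp add: smu power2_eq_square algebra_simps)
    then show False using neq ee1 ee2 by (simp add: mu_def)
  qed
  have F22: "a22 * (mu + e1*e2* sstar c mu) + d22 = 0"
    by (rule key[OF q2 q2s ee1(1) ee2(1) ne2])
  have assoc: "mstar c L0 ** mstar c X0 ** M ** X0 = mstar c L0 ** (mstar c X0 ** M ** X0)"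
    by (simp add: matrix_mul_assoc)
  have Pe: "(mstar c X0 ** A ** X0)$i$j = vform c (if i = 1 then x0 else xt0) A (if j = 1 then x0 else xt0)"
    for A i j
    using exhaust_2[of i] exhaust_2[of j] by (auto simp: prod_entry c1 c2)
  have eq: "mstar c X0 ** M ** X0 ** L0 + mscale (e1 * e2) (mstar c L0 ** mstar c X0 ** M ** X0)
              + mstar c X0 ** D ** X0
            = (\<chi> i j. if i = 1 \<and> j = 2 then 2 * e1 * e2 * sstar c lam0 * vform c x0 M xt0 + vform c x0 D xt0
                 else if i = 2 \<and> j = 1 then e2 * sstar c (2 * e1 * e2 * sstar c lam0 * vform c x0 M xt0 + vform c x0 D xt0) else 0)"
    unfolding assoc vec_eq_iff
  proof (intro allI)
    fix i j :: 2
    have E: "(mstar c X0 ** M ** X0 ** L0 + mscale (e1 * e2) (mstar c L0 ** (mstar c X0 ** M ** X0))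
              + mstar c X0 ** D ** X0)$i$j
         = (mstar c X0 ** M ** X0)$i$j * L0$j$j + e1*e2* sstar c (L0$i$i) * (mstar c X0 ** M ** X0)$i$j
           + (mstar c X0 ** D ** X0)$i$j"
      using exhaust_2[of i] exhaust_2[of j]
      by (auto simp: matrix_matrix_mult_def sum_2 mscale_def mstar_def L0_def sstar_0)
    have G: "vform c (if i = 1 then x0 else xt0) M (if j = 1 then x0 else xt0) * L0$j$j + e1*e2* sstar c (L0$i$i) * vform c (if i = 1 then x0 else xt0) M (if j = 1 then x0 else xt0)
           + vform c (if i = 1 then x0 else xt0) D (if j = 1 then x0 else xt0) = (\<chi> i j. if i = 1 \<and> j = 2 then 2 * e1 * e2 * sstar c lam0 * vform c x0 M xt0 + vform c x0 D xt0
                 else if i = 2 \<and> j = 1 then e2 * sstar c (2 * e1 * e2 * sstar c lam0 * vform c x0 M xt0 + vform c x0 D xt0) else 0)$i$j"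
      using exhaust_2[of i] exhaust_2[of j]
    proof (elim disjE)
      assume "i = 1" "j = 1"
      then show ?thesis using F11 by (simp add: L0_def a11_def d11_def algebra_simps)
    next
      assume "i = 1" "j = 2"
      then show ?thesis by (simp add: L0_def mu_def algebra_simps)
    next
      assume "i = 2" "j = 1"
      have s2: "sstar c 2 = 2" by (simp add: sstar_def)
      have x1: "e1*(e1*x) = x" for x using ee1(1) by (simp add: power2_eq_square mult.assoc[symmetric])
      have x2: "e2*(e2*x) = x" for x using ee2(1) by (simp add: power2_eq_square mult.assoc[symmetric])
      from \<open>i = 2\<close> \<open>j = 1\<close> show ?thesis using a21 d21 smu
        by (simp add: x1 x2 s2 ee1(2) ee2(2) sstar_sstar L0_def a21_def d21_def a12_def d12_def sstar_add sstar_mult algebra_simps power2_eq_square)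
    next
      assume "i = 2" "j = 2"
      then show ?thesis using F22 by (simp add: L0_def a22_def d22_def algebra_simps)
    qed
    show "(mstar c X0 ** M ** X0 ** L0 + mscale (e1 * e2) (mstar c L0 ** (mstar c X0 ** M ** X0))
              + mstar c X0 ** D ** X0)$i$j = (\<chi> i j. if i = 1 \<and> j = 2 then 2 * e1 * e2 * sstar c lam0 * vform c x0 M xt0 + vform c x0 D xt0
                 else if i = 2 \<and> j = 1 then e2 * sstar c (2 * e1 * e2 * sstar c lam0 * vform c x0 M xt0 + vform c x0 D xt0) else 0)$i$j"
      using E G unfolding Pe by simp
  qed
  show ?thesis
    unfolding Let_def X0_def[symmetric] mu_def[symmetric] L0_def[symmetric]
    using inv eq by simp
qed

end
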